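(* Let $a,b,c$ be positive numbers with $a<b<c$ and $b-a<c_0<a$, where $c_0=c-\lfloor c/b\rfloor b$. Then $$\mathcal D_{a,b,c}=\Big(\mathcal S_{a,b,c}\cap([0,c_0+a-b)+a\mathbb Z)\cap(\mathcal S_{a,b,c}-\lfloor c/b\rfloor b)\Big)\cup\Big(\mathcal S_{a,b,c}\cap\bigcup_{\lambda\in b\mathbb Z\cap[b,(\lfloor c/b\rfloor-1)b]}(\mathcal S_{a,b,c}-\lambda)\Big).$$
   Context: For $a,b,c>0$ and $t\in\mathbb R$, $\mathbf M_{a,b,c}(t)=(\chi_{[0,c)}(t-\mu+\lambda))_{\mu\in a\mathbb Z,\lambda\in b\mathbb Z}$ is the infinite matrix with rows indexed by $a\mathbb Z$ and columns by $b\mathbb Z$, acting by $(\mathbf M_{a,b,c}(t)\mathbf x)(\mu)=\sum_{\lambda\in b\mathbb Z}\chi_{[0,c)}(t-\mu+\lambda)\mathbf x(\lambda)$. $\mathcal B_b$ is the set of vectors $(\mathbf x(\lambda))_{\lambda\in b\mathbb Z}$ with entries in $\{0,1\}$, and $\mathcal B_b^0=\{\mathbf x\in\mathcal B_b:\mathbf x(0)=1\}$. $\mathbf 1,\mathbf 2$ denote the vectors indexed by $a\mathbb Z$ with all entries $1$, resp. $2$. $\mathcal D_{a,b,c}=\{t:\mathbf M_{a,b,c}(t)\mathbf x=\mathbf 2\text{ for some }\mathbf x\in\mathcal B_b^0\}$, $\mathcal S_{a,b,c}=\{t:\mathbf M_{a,b,c}(t)\mathbf x=\mathbf 1\text{ for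 some }\mathbf x\in\mathcal B_b^0\}$. For $A\subset\mathbb R$, $A-r=\{x-r:x\in A\}$ and $A+a\mathbb Z=\{x+ak:x\in A,k\in\mathbb Z\}$. *)

theory Defs
  imports "HOL-Analysis.Analysis"
begin

text \<open>Rows of M_{a,b,c}(t) are indexed by mu = a*k (k integer), columns by lambda = b*j.
  A vector indexed by bZ is a function int => real (entry at lambda = b*j is x j).
  The (M x)(mu) sum is over all lambda; only the finitely many lambda with
  t - mu + lambda in [0,c) contribute, so we sum over exactly those.\<close>

definition Mmul :: "real \<Rightarrow> real \<Rightarrow> real \<Rightarrow> real \<Rightarrow> (int \<Rightarrow> real) \<Rightarrow> int \<Rightarrow> real" where
  "Mmul a b c t x k =
     (\<Sum>j\<in>{j::int. 0 \<le> t - a * of_int k + b * of_int j \<and> t - a * of_int k + b * of_int j < c}.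
        indicator {0..<c} (t - a * of_int k + b * of_int j) * x j)"

definition Bb0 :: "(int \<Rightarrow> real) set" where
  "Bb0 = {x. (\<forall>j. x j \<in> {0, 1}) \<and> x 0 = 1}"

definition Dset :: "real \<Rightarrow> real \<Rightarrow> real \<Rightarrow> real set" where
  "Dset a b c = {t. \<exists>x\<in>Bb0. \<forall>k. Mmul a b c t x k = 2}"

definition Sset :: "real \<Rightarrow> real \<Rightarrow> real \<Rightarrow> real set" where
  "Sset a b c = {t. \<exists>x\<in>Bb0. \<forall>k. Mmul a b c t x k = 1}"

definition shift_set :: "real set \<Rightarrow> real \<Rightarrow> real set" where
  "shift_set A r = (\<lambda>x. x - r) ` A"

definition plus_aZ :: "real set \<Rightarrow> real \<Rightarrow> real set" where
  "plus_aZ A a = {x + a * of_int k | x k. x \<in> A}"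

end

theory Submission
  imports Defs
begin

lemma floor_div_bounds:
  assumes a: "0 < (a::real)"
  shows "a * of_int \<lfloor>y/a\<rfloor> \<le> y \<and> y < a * of_int \<lfloor>y/a\<rfloor> + a"
proof -
  have 1: "of_int \<lfloor>y/a\<rfloor> \<le> y/a" by (rule of_int_floor_le)
  have 2: "y/a < of_int \<lfloor>y/a\<rfloor> + 1" by (rule real_of_int_floor_add_one_gt)
  from 1 a have "a * of_int \<lfloor>y/a\<rfloor> \<le> y" by (simp add: le_divide_eq mult.commute)
  moreover have "y < a * (of_int \<lfloor>y/a\<rfloor> + 1)"
    using mult_strict_right_mono[OF 2 a] a by (simp add: mult.commute)
  ultimately show ?thesis by (simp add: algebra_simps)
qed

definition JJ :: "real \<Rightarrow> real \<Rightarrow> real \<Rightarrow> real \<Rightarrow> int \<Rightarrow> int set" where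
  "JJ a b c t k = {j::int. 0 \<le> t - a * of_int k + b * of_int j \<and> t - a * of_int k + b * of_int j < c}"

lemma finite_JJ:
  assumes b: "0 < (b::real)"
  shows "finite (JJ a b c t k)"
proof -
  have "JJ a b c t k \<subseteq> {\<lfloor>(a * of_int k - t)/b\<rfloor> .. \<lceil>(a * of_int k - t + c)/b\<rceil>}"
  proof
    fix j assume "j \<in> JJ a b c t k"
    hence h: "a * of_int k - t \<le> b * of_int j" "b * of_int j < a * of_int k - t + c"
      by (auto simp: JJ_def)
    have "(a * of_int k - t)/b \<le> of_int j" using h b by (simp add: divide_le_eq mult.commute)
    hence l: "\<lfloor>(a * of_int k - t)/b\<rfloor> \<le> j" by (simp add: floor_le_iff)
    have "of_int j \<le> (a * of_int k - t + c)/b" using h b by (simp add: le_divide_eq mult.commute)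
    hence "j \<le> \<lceil>(a * of_int k - t + c)/b\<rceil>" by (simp add: le_ceiling_iff)
    with l show "j \<in> {\<lfloor>(a * of_int k - t)/b\<rfloor> .. \<lceil>(a * of_int k - t + c)/b\<rceil>}" by simp
  qed
  thus ?thesis by (rule finite_subset) simp
qed

lemma Mmul_card:
  assumes b: "0 < b" and x: "\<forall>j. x j \<in> {0,1}"
  shows "Mmul a b c t x k = real (card (JJ a b c t k \<inter> {j. x j = 1}))"
proof -
  have "Mmul a b c t x k = (\<Sum>j\<in>JJ a b c t k. x j)"
    unfolding Mmul_def JJ_def by (intro sum.cong) (auto simp: indicator_def)
  also have "\<dots> = (\<Sum>j\<in>JJ a b c t k. if x j = 1 then 1 else 0)"
    using x by (intro sum.cong) auto
  also have "\<dots> = real (card (JJ a b c t k \<inter> {j. x j = 1}))"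
    using finite_JJ[OF b] by (smt (verit, ccfv_SIG) of_bool_eq(1,2) sum.cong sum_of_bool_eq)
  finally show ?thesis .
qed

lemma set_char:
  assumes b: "0 < b"
  shows "(\<exists>x\<in>Bb0. \<forall>k. Mmul a b c t x k = real n) \<longleftrightarrow>
         (\<exists>Y. 0 \<in> Y \<and> (\<forall>k. card (JJ a b c t k \<inter> Y) = n))"
proof
  assume "\<exists>x\<in>Bb0. \<forall>k. Mmul a b c t x k = real n"
  then obtain x where x: "x \<in> Bb0" "\<forall>k. Mmul a b c t x k = real n" by blast
  have bin: "\<forall>j. x j \<in> {0,1}" and x0: "x 0 = 1" using x(1) by (auto simp: Bb0_def)
  show "\<exists>Y. 0 \<in> Y \<and> (\<forall>k. card (JJ a b c t k \<inter> Y) = n)"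
    using x(2) Mmul_card[OF b bin] x0 by (intro exI[of _ "{j. x j = 1}"]) auto
next
  assume "\<exists>Y. 0 \<in> Y \<and> (\<forall>k. card (JJ a b c t k \<inter> Y) = n)"
  then obtain Y where Y: "0 \<in> Y" "\<forall>k. card (JJ a b c t k \<inter> Y) = n" by blast
  define x where "x = (\<lambda>j. if j \<in> Y then 1 else (0::real))"
  have bin: "\<forall>j. x j \<in> {0,1}" by (auto simp: x_def)
  have xB: "x \<in> Bb0" using Y(1) by (auto simp: Bb0_def x_def)
  have "{j. x j = 1} = Y" by (auto simp: x_def)
  hence "\<forall>k. Mmul a b c t x k = real n" using Mmul_card[OF b bin] Y(2) by simp
  with xB show "\<exists>x\<in>Bb0. \<forall>k. Mmul a b c t x k = real n" by blast
qed

lemma S_iff: "0 < b \<Longrightarrow> t \<in> Sset a b c \<longleftrightarrow> (\<exists>Y. 0 \<in> Y \<and> (\<forall>k. card (JJ a b c t k \<inter> Y) = 1))"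
  using set_char[of b a c t 1] by (simp add: Sset_def)

lemma D_iff: "0 < b \<Longrightarrow> t \<in> Dset a b c \<longleftrightarrow> (\<exists>Y. 0 \<in> Y \<and> (\<forall>k. card (JJ a b c t k \<inter> Y) = 2))"
  using set_char[of b a c t 2] by (simp add: Dset_def)

lemma JJ_shift: "j \<in> JJ a b c (t + b * of_int m) k \<longleftrightarrow> j + m \<in> JJ a b c t k"
  by (simp add: JJ_def algebra_simps)

lemma card_shift:
  "card (JJ a b c (t + b * of_int m) k \<inter> Z) = card (JJ a b c t k \<inter> (\<lambda>j. j + m) ` Z)"
proof -
  have "JJ a b c t k \<inter> (\<lambda>j. j + m) ` Z = (\<lambda>j. j + m) ` (JJ a b c (t + b * of_int m) k \<inter> Z)"
    by (auto simp: JJ_shift)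
  moreover have "inj_on (\<lambda>j::int. j + m) A" for A by (auto simp: inj_on_def)
  ultimately show ?thesis by (simp add: card_image)
qed

lemma S_shift_iff:
  assumes b: "0 < b"
  shows "t + b * of_int m \<in> Sset a b c \<longleftrightarrow> (\<exists>Z. m \<in> Z \<and> (\<forall>k. card (JJ a b c t k \<inter> Z) = 1))"
proof
  assume "t + b * of_int m \<in> Sset a b c"
  then obtain Y where Y: "0 \<in> Y" "\<forall>k. card (JJ a b c (t + b * of_int m) k \<inter> Y) = 1"
    using S_iff[OF b] by blast
  show "\<exists>Z. m \<in> Z \<and> (\<forall>k. card (JJ a b c t k \<inter> Z) = 1)"
    using Y card_shift[of a b c t m _ Y] by (intro exI[of _ "(\<lambda>j. j + m) ` Y"]) force
next
  assume "\<exists>Z. m \<in> Z \<and> (\<forall>k. card (JJ a b c t k \<inter> Z) = 1)"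
  then obtain Z where Z: "m \<in> Z" "\<forall>k. card (JJ a b c t k \<inter> Z) = 1" by blast
  define Y where "Y = {j. j + m \<in> Z}"
  have YZ: "(\<lambda>j. j + m) ` Y = Z"
    unfolding Y_def by (auto simp: image_iff intro!: exI[of _ "_ - m"])
  have "0 \<in> Y" using Z(1) by (simp add: Y_def)
  moreover have "\<forall>k. card (JJ a b c (t + b * of_int m) k \<inter> Y) = 1"
    using Z(2) card_shift[of a b c t m _ Y] YZ by simp
  ultimately show "t + b * of_int m \<in> Sset a b c" using S_iff[OF b] by blast
qed

lemma uniq_fwd:
  fixes W :: "int \<Rightarrow> int set"
  assumes conv: "\<And>k i j l. i \<in> W k \<Longrightarrow> l \<in> W k \<Longrightarrow> i \<le> j \<Longrightarrow> j \<le> l \<Longrightarrow> j \<in> W k"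
  and right: "\<And>i. \<exists>k. i \<in> W k \<and> (\<forall>j\<in>W k. j \<le> i)"
  and Y: "\<And>k. card (W k \<inter> Y) = 1" and Z: "\<And>k. card (W k \<inter> Z) = 1"
  and p: "p \<in> Y" "p \<in> Z"
  shows "p < i \<Longrightarrow> (i \<in> Y \<longleftrightarrow> i \<in> Z)"
proof (induction "nat (i - p)" arbitrary: i rule: less_induct)
  case less
  obtain k where k: "i \<in> W k" "\<forall>j\<in>W k. j \<le> i" using right by blast
  obtain y where y: "W k \<inter> Y = {y}" using Y[of k] card_1_singletonE by blast
  obtain z where z: "W k \<inter> Z = {z}" using Z[of k] card_1_singletonE by blast
  have yW: "y \<in> W k" "y \<in> Y" using y by auto
  have zW: "z \<in> W k" "z \<in> Z" using z by auto
  show ?case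
  proof (cases "p \<in> W k")
    case True
    then have "y = p" "z = p" using y z p by auto
    then show ?thesis using y z k(1) less.prems by auto
  next
    case False
    have gt: "\<forall>w\<in>W k. p < w"
    proof
      fix w assume w: "w \<in> W k"
      show "p < w"
      proof (rule ccontr)
        assume "\<not> p < w" then have "w \<le> p" by simp
        with conv[OF w k(1)] less.prems False show False by auto
      qed
    qed
    show ?thesis
    proof (cases "y < i")
      case True
      have py: "p < y" using gt yW by auto
      hence "nat (y - p) < nat (i - p)" using True by auto
      hence "y \<in> Z" using less.hyps[of y] py yW by auto
      hence "z = y" using z yW by auto
      then show ?thesis using y z True k(1) by blast
    next
      case False
      hence yi: "y = i" using yW k(2) by force
      show ?thesis
      proof (cases "z < i")
        case True
        have pz: "p < z" using gt zW by auto
        hence "nat (z - p) < nat (i - p)" using True by auto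
        hence "z \<in> Y" using less.hyps[of z] pz zW by auto
        hence "z = y" using y zW by auto
        then show ?thesis using yi True by auto
      next
        case False
        hence "z = i" using zW k(2) by force
        then show ?thesis using yi yW zW by auto
      qed
    qed
  qed
qed

lemma uniq_bwd:
  fixes W :: "int \<Rightarrow> int set"
  assumes conv: "\<And>k i j l. i \<in> W k \<Longrightarrow> l \<in> W k \<Longrightarrow> i \<le> j \<Longrightarrow> j \<le> l \<Longrightarrow> j \<in> W k"
  and left: "\<And>i. \<exists>k. i \<in> W k \<and> (\<forall>j\<in>W k. i \<le> j)"
  and Y: "\<And>k. card (W k \<inter> Y) = 1" and Z: "\<And>k. card (W k \<inter> Z) = 1"
  and p: "p \<in> Y" "p \<in> Z"
  shows "i < p \<Longrightarrow> (i \<in> Y \<longleftrightarrow> i \<in> Z)"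
proof (induction "nat (p - i)" arbitrary: i rule: less_induct)
  case less
  obtain k where k: "i \<in> W k" "\<forall>j\<in>W k. i \<le> j" using left by blast
  obtain y where y: "W k \<inter> Y = {y}" using Y[of k] card_1_singletonE by blast
  obtain z where z: "W k \<inter> Z = {z}" using Z[of k] card_1_singletonE by blast
  have yW: "y \<in> W k" "y \<in> Y" using y by auto
  have zW: "z \<in> W k" "z \<in> Z" using z by auto
  show ?case
  proof (cases "p \<in> W k")
    case True
    then have "y = p" "z = p" using y z p by auto
    then show ?thesis using y z k(1) less.prems by auto
  next
    case False
    have gt: "\<forall>w\<in>W k. w < p"
    proof
      fix w assume w: "w \<in> W k"
      show "w < p"
      proof (rule ccontr)
        assume "\<not> w < p" then have "p \<le> w" by simp
        with conv[OF k(1) w] less.prems False show False by auto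
      qed
    qed
    show ?thesis
    proof (cases "i < y")
      case True
      have py: "y < p" using gt yW by auto
      hence "nat (p - y) < nat (p - i)" using True by auto
      hence "y \<in> Z" using less.hyps[of y] py yW by auto
      hence "z = y" using z yW by auto
      then show ?thesis using y z True k(1) by blast
    next
      case False
      hence yi: "y = i" using yW k(2) by force
      show ?thesis
      proof (cases "i < z")
        case True
        have pz: "z < p" using gt zW by auto
        hence "nat (p - z) < nat (p - i)" using True by auto
        hence "z \<in> Y" using less.hyps[of z] pz zW by auto
        hence "z = y" using y zW by auto
        then show ?thesis using yi True by auto
      next
        case False
        hence "z = i" using zW k(2) by force
        then show ?thesis using yi yW zW by auto
      qed
    qed
  qed
qed

lemma uniq:
  fixes W :: "int \<Rightarrow> int set"
  assumes conv: "\<And>k i j l. i \<in> W k \<Longrightarrow> l \<in> W k \<Longrightarrow> i \<le> j \<Longrightarrow> j \<le> l \<Longrightarrow> j \<in> W k"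
  and left: "\<And>i. \<exists>k. i \<in> W k \<and> (\<forall>j\<in>W k. i \<le> j)"
  and right: "\<And>i. \<exists>k. i \<in> W k \<and> (\<forall>j\<in>W k. j \<le> i)"
  and Y: "\<And>k. card (W k \<inter> Y) = 1" and Z: "\<And>k. card (W k \<inter> Z) = 1"
  and p: "p \<in> Y" "p \<in> Z"
  shows "Y = Z"
proof -
  have "i \<in> Y \<longleftrightarrow> i \<in> Z" for i
    using uniq_fwd[OF conv right Y Z p, where i=i] uniq_bwd[OF conv left Y Z p, where i=i] p
    by (cases i p rule: linorder_cases) auto
  thus ?thesis by blast
qed

lemma JJ_conv:
  assumes "0 < b" "i \<in> JJ a b c t k" "l \<in> JJ a b c t k" "i \<le> j" "j \<le> l"
  shows "j \<in> JJ a b c t k"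
proof -
  have "b * of_int i \<le> b * of_int j" "b * of_int j \<le> b * of_int l"
    using assms by (auto intro: mult_left_mono)
  thus ?thesis using assms(2,3) by (auto simp: JJ_def)
qed

lemma JJ_left:
  assumes a: "0 < a" and ab: "a < b" and bc: "b < c"
  shows "\<exists>k. i \<in> JJ a b c t k \<and> (\<forall>j\<in>JJ a b c t k. i \<le> j)"
proof -
  define k where "k = \<lfloor>(t + b * of_int i)/a\<rfloor>"
  have f: "a * of_int k \<le> t + b * of_int i" "t + b * of_int i < a * of_int k + a"
    using floor_div_bounds[OF a, of "t + b * of_int i"] by (auto simp: k_def)
  have "i \<in> JJ a b c t k" using f ab bc by (auto simp: JJ_def)
  moreover have "i \<le> j" if "j \<in> JJ a b c t k" for j
  proof (rule ccontr)
    assume "\<not> i \<le> j" hence "j \<le> i - 1" by simp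
    hence "b * of_int j \<le> b * (of_int i - 1)" using ab a by (intro mult_left_mono) auto
    thus False using that f ab by (auto simp: JJ_def algebra_simps)
  qed
  ultimately show ?thesis by blast
qed

lemma JJ_right:
  assumes a: "0 < a" and ab: "a < b" and bc: "b < c"
  shows "\<exists>k. i \<in> JJ a b c t k \<and> (\<forall>j\<in>JJ a b c t k. j \<le> i)"
proof -
  define k where "k = \<lfloor>(t + b * of_int i + b - c)/a\<rfloor>"
  have f: "a * of_int k \<le> t + b * of_int i + b - c" "t + b * of_int i + b - c < a * of_int k + a"
    using floor_div_bounds[OF a, of "t + b * of_int i + b - c"] by (auto simp: k_def)
  have "i \<in> JJ a b c t k" using f ab bc by (auto simp: JJ_def)
  moreover have "j \<le> i" if "j \<in> JJ a b c t k" for j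
  proof (rule ccontr)
    assume "\<not> j \<le> i" hence "i + 1 \<le> j" by simp
    hence "b * (of_int i + 1) \<le> b * of_int j" using ab a by (intro mult_left_mono) auto
    thus False using that f ab by (auto simp: JJ_def algebra_simps)
  qed
  ultimately show ?thesis by blast
qed

lemma uniqJ:
  assumes a: "0 < a" and ab: "a < b" and bc: "b < c"
  and Y: "\<And>k. card (JJ a b c t k \<inter> Y) = 1" and Z: "\<And>k. card (JJ a b c t k \<inter> Z) = 1"
  and p: "p \<in> Y" "p \<in> Z"
  shows "Y = Z"
proof (rule uniq[OF _ _ _ Y Z p])
  show "\<And>k i j l. i \<in> JJ a b c t k \<Longrightarrow> l \<in> JJ a b c t k \<Longrightarrow> i \<le> j \<Longrightarrow> j \<le> l \<Longrightarrow> j \<in> JJ a b c t k"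
    using JJ_conv a ab by (metis order.strict_trans)
  show "\<And>i. \<exists>k. i \<in> JJ a b c t k \<and> (\<forall>j\<in>JJ a b c t k. i \<le> j)" using JJ_left[OF a ab bc] .
  show "\<And>i. \<exists>k. i \<in> JJ a b c t k \<and> (\<forall>j\<in>JJ a b c t k. j \<le> i)" using JJ_right[OF a ab bc] .
qed

definition cnt :: "int set \<Rightarrow> int \<Rightarrow> int" where
  "cnt X x = int (card (X \<inter> {0..<x})) - int (card (X \<inter> {x..<0}))"


lemma cnt_step: "cnt X (x + 1) = cnt X x + (if x \<in> X then 1 else 0)"
proof (cases "0 \<le> x")
  case True
  have e1: "{0..<x+1} = insert x {0..<x}" using True by auto
  have e2: "{x+1..<0} = {}" "{x..<0} = ({}::int set)" using True by auto
  show ?thesis unfolding cnt_def e1 e2 by (auto simp: Int_insert_right)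
next
  case False
  have e1: "{0..<x+1} = {}" "{0..<x} = ({}::int set)" using False by auto
  have e2: "{x..<0} = insert x {x+1..<0}" using False by auto
  show ?thesis unfolding cnt_def e1 e2 by (auto simp: Int_insert_right)
qed


lemma cnt_diff:
  assumes "u \<le> v"
  shows "cnt X v - cnt X u = int (card (X \<inter> {u..<v}))"
  using assms
proof (induction v rule: int_ge_induct)
  case base
  then show ?case by simp
next
  case (step v)
  have e: "{u..<v+1} = insert v {u..<v}" using step.hyps by auto
  show ?case using step.IH unfolding e cnt_step by (auto simp: Int_insert_right)
qed


lemma shift_mem: "t \<in> shift_set A r \<longleftrightarrow> t + r \<in> A"
proof
  assume "t \<in> shift_set A r"
  then obtain x where "x \<in> A" "t = x - r" by (auto simp: shift_set_def)
  thus "t + r \<in> A" by simp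
next
  assume "t + r \<in> A"
  hence "(t + r) - r \<in> shift_set A r" unfolding shift_set_def by blast
  thus "t \<in> shift_set A r" by simp
qed

lemma consec:
  assumes b: "0 < b" and X: "JJ a b c t k \<inter> X = {u, v}" and uv: "u < v"
  shows "X \<inter> {u..<v} = {u}"
proof
  show "{u} \<subseteq> X \<inter> {u..<v}" using X uv by auto
  show "X \<inter> {u..<v} \<subseteq> {u}"
  proof
    fix w assume w: "w \<in> X \<inter> {u..<v}"
    have uJ: "u \<in> JJ a b c t k" and vJ: "v \<in> JJ a b c t k" using X by auto
    have "u \<le> w" "w \<le> v" using w by auto
    hence "w \<in> JJ a b c t k" using JJ_conv[OF b uJ vJ] by blast
    hence "w \<in> {u, v}" using w X by blast
    thus "w \<in> {u}" using w by auto
  qed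
qed


lemma two_split:
  assumes b: "0 < b" and X: "card (JJ a b c t k \<inter> X) = 2"
  shows "card (JJ a b c t k \<inter> {x\<in>X. even (cnt X x)}) = 1"
    "card (JJ a b c t k \<inter> {x\<in>X. odd (cnt X x)}) = 1"
proof -
  obtain u v where uv0: "JJ a b c t k \<inter> X = {u, v}" "u \<noteq> v"
    using X by (auto simp: card_2_iff)
  obtain u' v' where uv: "JJ a b c t k \<inter> X = {u', v'}" "u' < v'"
    using uv0 by (metis insert_commute linorder_neq_iff)
  have "cnt X v' - cnt X u' = 1"
    using cnt_diff[of u' v' X] consec[OF b uv] uv(2) by simp
  hence par: "even (cnt X v') \<longleftrightarrow> odd (cnt X u')"
    by (metis add_diff_cancel_left' even_plus_one_iff diff_add_cancel)
  have E: "JJ a b c t k \<inter> {x\<in>X. P x} = {x\<in>{u',v'}. P x}" for P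
    using uv(1) by auto
  have ne: "u' \<noteq> v'" using uv(2) by simp
  show "card (JJ a b c t k \<inter> {x\<in>X. even (cnt X x)}) = 1"
  proof (cases "even (cnt X u')")
    case True
    hence "{x\<in>{u',v'}. even (cnt X x)} = {u'}" using par ne by auto
    thus ?thesis unfolding E by simp
  next
    case False
    hence "{x\<in>{u',v'}. even (cnt X x)} = {v'}" using par ne by auto
    thus ?thesis unfolding E by simp
  qed
  show "card (JJ a b c t k \<inter> {x\<in>X. odd (cnt X x)}) = 1"
  proof (cases "even (cnt X u')")
    case True
    hence "{x\<in>{u',v'}. odd (cnt X x)} = {v'}" using par ne by auto
    thus ?thesis unfolding E by simp
  next
    case False
    hence "{x\<in>{u',v'}. odd (cnt X x)} = {u'}" using par ne by auto
    thus ?thesis unfolding E by simp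
  qed
qed

lemma combine:
  assumes a: "0 < a" and ab: "a < b" and bc: "b < c"
  and Y: "0 \<in> Y" "\<And>k. card (JJ a b c t k \<inter> Y) = 1"
  and Z: "j \<in> Z" "\<And>k. card (JJ a b c t k \<inter> Z) = 1"
  and j: "j \<noteq> 0" and m: "0 \<in> JJ a b c t m" "j \<in> JJ a b c t m"
  shows "t \<in> Dset a b c"
proof -
  have b: "0 < b" using a ab by simp
  have jY: "j \<notin> Y"
  proof
    assume "j \<in> Y"
    obtain y where y: "JJ a b c t m \<inter> Y = {y}" using Y(2)[of m] card_1_singletonE by blast
    have "j \<in> {y}" "0 \<in> {y}" using y \<open>j \<in> Y\<close> Y(1) m by blast+
    thus False using j by simp
  qed
  have disj: "Y \<inter> Z = {}"
  proof (rule ccontr)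
    assume "Y \<inter> Z \<noteq> {}"
    then obtain p where "p \<in> Y" "p \<in> Z" by blast
    hence "Y = Z" using uniqJ[OF a ab bc Y(2) Z(2)] by blast
    thus False using jY Z(1) by simp
  qed
  have "card (JJ a b c t k \<inter> (Y \<union> Z)) = 2" for k
  proof -
    have "JJ a b c t k \<inter> (Y \<union> Z) = (JJ a b c t k \<inter> Y) \<union> (JJ a b c t k \<inter> Z)" by blast
    moreover have "card ((JJ a b c t k \<inter> Y) \<union> (JJ a b c t k \<inter> Z)) = 2"
    proof -
      have d: "(JJ a b c t k \<inter> Y) \<inter> (JJ a b c t k \<inter> Z) = {}" using disj by blast
      have f: "finite (JJ a b c t k \<inter> Y)" "finite (JJ a b c t k \<inter> Z)" using finite_JJ[OF b] by auto
      show ?thesis using card_Un_disjoint[OF f d] Y(2)[of k] Z(2)[of k] by simp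
    qed
    ultimately show ?thesis by simp
  qed
  thus ?thesis using D_iff[OF b] Y(1) by blast
qed


lemma JJ_mem: "j \<in> JJ a b c t k \<longleftrightarrow> 0 \<le> t - a * of_int k + b * of_int j \<and> t - a * of_int k + b * of_int j < c"
  by (simp add: JJ_def)

lemma main_sub:
  fixes a b c :: real
  assumes a: "0 < a" and ab: "a < b" and bc: "b < c" and L: "L = \<lfloor>c/b\<rfloor>"
    and c0: "c0 = c - of_int L * b" and h1: "b - a < c0" and h2: "c0 < a"
    and tD: "t \<in> Dset a b c"
  shows "t \<in> (Sset a b c \<inter> plus_aZ {0..<c0 + a - b} a \<inter> shift_set (Sset a b c) (of_int L * b))
     \<union> (Sset a b c \<inter>
        (\<Union>lam\<in>{b * of_int j | j::int. b \<le> b * of_int j \<and> b * of_int j \<le> (of_int L - 1) * b}.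
           shift_set (Sset a b c) lam))"
proof -
  have b: "0 < b" using a ab by simp
  obtain X where X0: "0 \<in> X" and X: "\<And>k. card (JJ a b c t k \<inter> X) = 2"
    using D_iff[OF b] tD by blast
  define Y where "Y = {x\<in>X. even (cnt X x)}"
  define Z where "Z = {x\<in>X. odd (cnt X x)}"
  have Y1: "\<And>k. card (JJ a b c t k \<inter> Y) = 1" unfolding Y_def using two_split[OF b X] by blast
  have Z1: "\<And>k. card (JJ a b c t k \<inter> Z) = 1" unfolding Z_def using two_split[OF b X] by blast
  have Y0: "0 \<in> Y" using X0 by (simp add: Y_def cnt_def)
  have tS: "t \<in> Sset a b c" using S_iff[OF b] Y0 Y1 by blast
  define k0 where "k0 = \<lfloor>t/a\<rfloor>"
  define r where "r = t - a * of_int k0"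
  have r: "0 \<le> r" "r < a" using floor_div_bounds[OF a, of t] by (auto simp: r_def k0_def)
  have Jk0: "j \<in> JJ a b c t k0 \<longleftrightarrow> 0 \<le> r + b * of_int j \<and> r + b * of_int j < c" for j
    by (simp add: JJ_mem r_def)
  have Jk0_nonneg: "0 \<le> j" if "j \<in> JJ a b c t k0" for j
  proof (rule ccontr)
    assume "\<not> 0 \<le> j" hence "of_int j \<le> (-1::real)" by simp
    hence "b * of_int j \<le> - b" using b by (metis mult_left_mono mult_minus1_right less_imp_le)
    thus False using that Jk0 r ab by force
  qed
  obtain u v where uv0: "JJ a b c t k0 \<inter> X = {u, v}" "u \<noteq> v"
    using X[of k0] by (auto simp: card_2_iff)
  obtain u' q where uv: "JJ a b c t k0 \<inter> X = {u', q}" "u' < q"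
    using uv0 by (metis insert_commute linorder_neq_iff)
  have zero_in: "0 \<in> JJ a b c t k0" using Jk0 r bc ab by simp
  have u'0: "u' = 0"
  proof -
    have "0 \<in> {u', q}" using uv(1) zero_in X0 by blast
    moreover have "0 \<le> u'" using Jk0_nonneg uv(1) by blast
    ultimately show ?thesis using uv(2) by auto
  qed
  have qJ: "q \<in> JJ a b c t k0" and qX: "q \<in> X" using uv(1) by auto
  have q1: "1 \<le> q" using uv(2) u'0 by simp
  have "cnt X q - cnt X 0 = 1"
    using cnt_diff[of 0 q X] consec[OF b uv(1) uv(2)] u'0 q1 by simp
  hence "cnt X q = 1" by (simp add: cnt_def)
  hence qZ: "q \<in> Z" using qX by (simp add: Z_def)
  have tqS: "t + b * of_int q \<in> Sset a b c" using S_shift_iff[OF b] qZ Z1 by blast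
  have bq: "b * of_int q < c" using qJ Jk0 r by simp
  have qL: "q \<le> L"
  proof -
    have "of_int q < c / b" using bq b by (simp add: pos_less_divide_eq mult.commute)
    thus ?thesis unfolding L by (simp add: le_floor_iff)
  qed
  show ?thesis
  proof (cases "q \<le> L - 1")
    case True
    have "b * 1 \<le> b * of_int q" using q1 b by (intro mult_left_mono) auto
    moreover have "b * of_int q \<le> b * (of_int L - 1)" using True b by (intro mult_left_mono) auto
    ultimately have mem: "b * of_int q \<in> {b * of_int j | j::int. b \<le> b * of_int j \<and> b * of_int j \<le> (of_int L - 1) * b}"
      by (auto simp: mult.commute)
    have "t \<in> shift_set (Sset a b c) (b * of_int q)" using tqS shift_mem by blast
    thus ?thesis using mem tS by blast
  next
    case False
    hence qL': "q = L" using qL by simp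
    have rlt: "r < c0 + a - b"
    proof (rule ccontr)
      assume "\<not> r < c0 + a - b" hence rge: "c0 + a - b \<le> r" by simp
      have sub: "JJ a b c t (k0 + 1) \<inter> X \<subseteq> {q}"
      proof
        fix w assume w: "w \<in> JJ a b c t (k0 + 1) \<inter> X"
        have wb: "0 \<le> r - a + b * of_int w" "r - a + b * of_int w < c"
          using w by (auto simp: JJ_mem r_def algebra_simps)
        have "0 < b * of_int w" using wb r by linarith
        hence w1: "0 < w" using b by (simp add: zero_less_mult_iff)
        have "b * of_int w < b * (of_int L + 1)" using wb rge c0 by (simp add: algebra_simps)
        hence "of_int w < of_int L + (1::real)" using b by simp
        hence wL: "w \<le> q" using qL' by linarith
        have "w \<in> JJ a b c t k0" using JJ_conv[OF b zero_in qJ] w1 wL by simp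
        hence "w \<in> {u', q}" using w uv(1) by blast
        thus "w \<in> {q}" using w1 u'0 by auto
      qed
      have "card (JJ a b c t (k0 + 1) \<inter> X) \<le> card {q}" by (rule card_mono) (simp_all add: sub)
      thus False using X[of "k0 + 1"] by simp
    qed
    have "t \<in> plus_aZ {0..<c0 + a - b} a"
      unfolding plus_aZ_def using r(1) rlt by (intro CollectI exI[of _ r] exI[of _ k0]) (simp add: r_def)
    moreover have "t \<in> shift_set (Sset a b c) (of_int L * b)"
      using tqS shift_mem qL' by (metis mult.commute)
    ultimately show ?thesis using tS by blast
  qed
qed

lemma main_sup:
  fixes a b c :: real
  assumes a: "0 < a" and ab: "a < b" and bc: "b < c" and L: "L = \<lfloor>c/b\<rfloor>"
    and c0: "c0 = c - of_int L * b" and h1: "b - a < c0" and h2: "c0 < a"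
    and tR: "t \<in> (Sset a b c \<inter> plus_aZ {0..<c0 + a - b} a \<inter> shift_set (Sset a b c) (of_int L * b))
     \<union> (Sset a b c \<inter>
        (\<Union>lam\<in>{b * of_int j | j::int. b \<le> b * of_int j \<and> b * of_int j \<le> (of_int L - 1) * b}.
           shift_set (Sset a b c) lam))"
  shows "t \<in> Dset a b c"
proof -
  have b: "0 < b" using a ab by simp
  have tS: "t \<in> Sset a b c" using tR by blast
  then obtain Y where Y0: "0 \<in> Y" and Y1: "\<And>k. card (JJ a b c t k \<inter> Y) = 1"
    using S_iff[OF b] by blast
  have L1: "1 \<le> L"
  proof -
    have "1 \<le> c / b" using bc b by simp
    thus ?thesis unfolding L by (simp add: le_floor_iff)
  qed
  from tR show ?thesis
  proof
    assume A: "t \<in> Sset a b c \<inter> plus_aZ {0..<c0 + a - b} a \<inter> shift_set (Sset a b c) (of_int L * b)"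
    then obtain x m where xm: "t = x + a * of_int m" "0 \<le> x" "x < c0 + a - b"
      unfolding plus_aZ_def by auto
    have "t + b * of_int L \<in> Sset a b c" using A shift_mem by (metis IntD2 mult.commute)
    then obtain Z where Z0: "L \<in> Z" and Z1: "\<And>k. card (JJ a b c t k \<inter> Z) = 1"
      using S_shift_iff[OF b] by blast
    have "0 \<in> JJ a b c t m" using xm h1 h2 ab bc by (simp add: JJ_mem)
    moreover have "L \<in> JJ a b c t m"
    proof -
      have "0 \<le> b * of_int L" using L1 b by simp
      moreover have "b * of_int L = c - c0" using c0 by simp
      ultimately show ?thesis using xm ab by (simp add: JJ_mem)
    qed
    moreover have "L \<noteq> 0" using L1 by simp
    ultimately show ?thesis using combine[OF a ab bc Y0 Y1 Z0 Z1] by blast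
  next
    assume B: "t \<in> Sset a b c \<inter>
        (\<Union>lam\<in>{b * of_int j | j::int. b \<le> b * of_int j \<and> b * of_int j \<le> (of_int L - 1) * b}.
           shift_set (Sset a b c) lam)"
    then obtain j where j: "b \<le> b * of_int j" "b * of_int j \<le> (of_int L - 1) * b"
      and tj: "t \<in> shift_set (Sset a b c) (b * of_int j)" by blast
    have "t + b * of_int j \<in> Sset a b c" using tj shift_mem by blast
    then obtain Z where Z0: "j \<in> Z" and Z1: "\<And>k. card (JJ a b c t k \<inter> Z) = 1"
      using S_shift_iff[OF b] by blast
    define k0 where "k0 = \<lfloor>t/a\<rfloor>"
    define r where "r = t - a * of_int k0"
    have r: "0 \<le> r" "r < a" using floor_div_bounds[OF a, of t] by (auto simp: r_def k0_def)
    have Jk0: "i \<in> JJ a b c t k0 \<longleftrightarrow> 0 \<le> r + b * of_int i \<and> r + b * of_int i < c" for i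
      by (simp add: JJ_mem r_def)
    have "0 \<in> JJ a b c t k0" using Jk0 r ab bc by simp
    moreover have "j \<in> JJ a b c t k0"
    proof -
      have "(of_int L - 1) * b = c - c0 - b" using c0 by (simp add: algebra_simps)
      thus ?thesis using Jk0 r j b h1 h2 ab by simp
    qed
    moreover have "j \<noteq> 0" using j(1) b by auto
    ultimately show ?thesis using combine[OF a ab bc Y0 Y1 Z0 Z1] by blast
  qed
qed

lemma main:
  fixes a b c :: real
  assumes a: "0 < a" and ab: "a < b" and bc: "b < c" and L: "L = \<lfloor>c/b\<rfloor>"
    and c0: "c0 = c - of_int L * b" and h1: "b - a < c0" and h2: "c0 < a"
  shows "Dset a b c = (Sset a b c \<inter> plus_aZ {0..<c0 + a - b} a \<inter> shift_set (Sset a b c) (of_int L * b))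
     \<union> (Sset a b c \<inter>
        (\<Union>lam\<in>{b * of_int j | j::int. b \<le> b * of_int j \<and> b * of_int j \<le> (of_int L - 1) * b}.
           shift_set (Sset a b c) lam))"
  using main_sub[OF assms] main_sup[OF assms] by blast

theorem theorem4p2:
  fixes a b c :: real
  assumes "0 < a" and "a < b" and "b < c"
    and "b - a < c - of_int \<lfloor>c / b\<rfloor> * b"
    and "c - of_int \<lfloor>c / b\<rfloor> * b < a"
  shows "Dset a b c =
     (Sset a b c \<inter> plus_aZ {0..<(c - of_int \<lfloor>c / b\<rfloor> * b) + a - b} a
        \<inter> shift_set (Sset a b c) (of_int \<lfloor>c / b\<rfloor> * b))
     \<union> (Sset a b c \<inter>
        (\<Union>lam\<in>{b * of_int j | j::int. b \<le> b * of_int j \<and> b * of_int j \<le> (of_int \<lfloor>c / b\<rfloor> - 1) * b}.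
           shift_set (Sset a b c) lam))"
  by (rule main[OF assms(1,2,3) refl refl assms(4,5)])

end
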